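(* Let $p,q\in\mathbb{N}$, $\alpha_1,\dots,\alpha_p,\beta_1,\dots,\beta_q\in\mathbb{R}$, $A_1,\dots,A_p,B_1,\dots,B_q>0$, with $\sum_{k=1}^q\beta_k-\sum_{j=1}^p\alpha_j+\frac{p-q}{2}>0$ and $\sum_{j=1}^pA_j=\sum_{k=1}^qB_k$, and with $\psi_{n,m}=\frac{\prod_{i=1}^p\Gamma(\alpha_i+(n+m)A_i)}{\prod_{j=1}^q\Gamma(\beta_j+(n+m)B_j)}$ satisfying $\psi_{n,2}<\psi_{n,1}$ and $\psi_{n,1}^2<\psi_{n,0}\psi_{n,2}$ for all $n\in\mathbb{N}_0$. For $\sigma>0$ and $z\in(0,1)$ let $\Xi(\sigma)=\Xi_z(\sigma)={}_{p+1}\Psi_q\Big[_{(\beta_1,B_1),\dots,(\beta_q,B_q)}^{(\sigma,1),(\alpha_1,A_1),\dots,(\alpha_p,A_p)}\Big|z\Big]$. Then for each $z\in(0,1)$ the function $\sigma\mapsto\Xi(\sigma)$ is log-convex on $(0,\infty)$, and $$\Xi(\sigma)\,\Xi(\sigma+2)-\Xi(\sigma+1)^2\ge0$$ for all $\sigma\in(0,\infty)$ and $z\in(0,1)$.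
   Context: The Fox-Wright function with parameters $(a_i,C_i)_{i=1}^{r}$ upstairs and $(b_j,D_j)_{j=1}^s$ downstairs ($C_i,D_j>0$) is ${}_r\Psi_s\Big[_{(b_1,D_1),\dots,(b_s,D_s)}^{(a_1,C_1),\dots,(a_r,C_r)}\Big|z\Big]=\sum_{k=0}^\infty\frac{\prod_{i=1}^r\Gamma(a_i+kC_i)}{\prod_{j=1}^s\Gamma(b_j+kD_j)}\frac{z^k}{k!}$. *)

theory Defs
  imports "HOL-Analysis.Analysis"
begin

definition fox_wright :: "(real \<times> real) list \<Rightarrow> (real \<times> real) list \<Rightarrow> real \<Rightarrow> real" where
  "fox_wright as bs z =
     (\<Sum>k. (\<Prod>(a, c)\<leftarrow>as. Gamma (a + real k * c)) / (\<Prod>(b, d)\<leftarrow>bs. Gamma (b + real k * d))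
            * z ^ k / fact k)"

definition log_convex_on :: "real set \<Rightarrow> (real \<Rightarrow> real) \<Rightarrow> bool" where
  "log_convex_on S f \<longleftrightarrow> (\<forall>x\<in>S. f x > 0) \<and> convex_on S (\<lambda>x. ln (f x))"

end

theory Submission
  imports Defs "HOL-Real_Asymp.Real_Asymp"
begin

lemma prod_list_upt_conv:
  "prod_list (map f [1..<p+1]) = (\<Prod>i=1..p. f i)"
  by (induction p) (auto simp: atLeastAtMostSuc_conv mult.commute)

lemma prod_list_pairs:
  "(\<Prod>(a, c)\<leftarrow>map (\<lambda>i. (f i, g i)) [1..<n+1]. Gamma (a + x * c)) = (\<Prod>i=1..n. Gamma (f i + x * g i))"
  by (simp only: map_map prod_list_upt_conv) (simp add: o_def)

lemma holder_series:
  fixes a b c m :: "nat \<Rightarrow> real" and t :: real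
  assumes c: "\<And>k. c k > 0" and a: "\<And>k. a k > 0" and b: "\<And>k. b k > 0"
    and sa: "summable (\<lambda>k. c k * a k)" and sb: "summable (\<lambda>k. c k * b k)"
    and t: "0 < t" "t < 1"
    and m0: "\<And>k. m k \<ge> 0"
    and m: "\<And>k. m k \<le> a k powr (1 - t) * b k powr t"
  shows "summable (\<lambda>k. c k * m k) \<and>
    (\<Sum>k. c k * m k) \<le> (\<Sum>k. c k * a k) powr (1 - t) * (\<Sum>k. c k * b k) powr t"
proof -
  define X where "X = (\<Sum>k. c k * a k)"
  define Y where "Y = (\<Sum>k. c k * b k)"
  have X: "X > 0" unfolding X_def
    by (rule suminf_pos[OF sa]) (simp add: a c)
  have Y: "Y > 0" unfolding Y_def
    by (rule suminf_pos[OF sb]) (simp add: b c)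
  define K where "K = X powr (1 - t) * Y powr t"
  have K: "K > 0" using X Y unfolding K_def by simp
  define g where "g k = c k * ((1 - t) * a k / X + t * b k / Y)" for k
  have g_eq: "g = (\<lambda>k. ((1 - t) / X) * (c k * a k) + (t / Y) * (c k * b k))"
    by (auto simp: g_def fun_eq_iff field_simps)
  have sg: "summable g" unfolding g_eq
    by (intro summable_add summable_mult sa sb)
  have g1: "(\<Sum>k. g k) = 1"
  proof -
    have "(\<Sum>k. g k) = (\<Sum>k. ((1 - t) / X) * (c k * a k)) + (\<Sum>k. (t / Y) * (c k * b k))"
      unfolding g_eq by (rule suminf_add[symmetric]) (intro summable_mult sa sb)+
    also have "\<dots> = ((1 - t) / X) * X + (t / Y) * Y"
      by (simp only: suminf_mult[OF sa] suminf_mult[OF sb] X_def Y_def)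
    also have "\<dots> = 1" using X Y by simp
    finally show ?thesis .
  qed
  have le: "c k * m k \<le> K * g k" for k
  proof -
    have "a k powr (1 - t) * b k powr t
        = K * ((a k / X) powr (1 - t) * (b k / Y) powr t)"
      using X Y a[of k] b[of k] unfolding K_def by (simp add: powr_divide field_simps)
    also have "\<dots> \<le> K * ((1 - t) * (a k / X) + t * (b k / Y))"
      using K X Y a[of k] b[of k] t
      by (intro mult_left_mono Youngs_inequality_0) auto
    finally have "m k \<le> K * ((1 - t) * (a k / X) + t * (b k / Y))"
      using m[of k] by linarith
    then have "c k * m k \<le> c k * (K * ((1 - t) * (a k / X) + t * (b k / Y)))"
      using c[of k] by (intro mult_left_mono) auto
    then show ?thesis by (simp add: g_def algebra_simps)
  qed
  have sKg: "summable (\<lambda>k. K * g k)" by (intro summable_mult sg)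
  have s: "summable (\<lambda>k. c k * m k)"
    by (rule summable_comparison_test[OF _ sKg])
       (use le c m0 in \<open>auto intro!: exI[of _ 0] simp: abs_of_nonneg less_imp_le\<close>)
  have "(\<Sum>k. c k * m k) \<le> (\<Sum>k. K * g k)"
    by (rule suminf_le[OF le s sKg])
  also have "\<dots> = K" using sg g1 by (simp add: suminf_mult)
  finally show ?thesis using s unfolding K_def X_def Y_def by simp
qed


lemma gamma_summable:
  fixes z w :: real
  assumes z: "0 < z" "z < 1" and w: "w > 0"
  shows "summable (\<lambda>k. z ^ k * Gamma (w + real k) / fact k)"
proof -
  define h where "h k = z ^ k * Gamma (w + real k) / fact k" for k
  have hpos: "h k > 0" for k unfolding h_def using z w by (intro divide_pos_pos mult_pos_pos) auto
  have hs: "h (Suc k) = (z * (w + real k) / (real k + 1)) * h k" for k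
  proof -
    have "Gamma (w + real (Suc k)) = (w + real k) * Gamma (w + real k)"
    proof -
      have "w + real k > 0" using w by simp
      then have "w + real k \<notin> \<int>\<^sub>\<le>\<^sub>0" using nonpos_Ints_nonpos by fastforce
      then show ?thesis using Gamma_plus1[of "w + real k"] by (simp add: add_ac)
    qed
    then show ?thesis unfolding h_def by (simp add: field_simps)
  qed
  have lim: "(\<lambda>k. z * (w + real k) / (real k + 1)) \<longlonglongrightarrow> z" by real_asymp
  have "eventually (\<lambda>k. z * (w + real k) / (real k + 1) < (1 + z) / 2) sequentially"
    by (rule order_tendstoD(2)[OF lim]) (use z in simp)
  then obtain N where N: "\<And>k. k \<ge> N \<Longrightarrow> z * (w + real k) / (real k + 1) < (1 + z) / 2"
    by (auto simp: eventually_sequentially)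
  have "summable h"
  proof (rule summable_ratio_test[of "(1 + z) / 2" N])
    show "(1 + z) / 2 < 1" using z by simp
    fix n assume "n \<ge> N"
    then have "h (Suc n) \<le> (1 + z) / 2 * h n"
      unfolding hs using N[of n] hpos[of n] by (intro mult_right_mono) auto
    then show "norm (h (Suc n)) \<le> (1 + z) / 2 * norm (h n)"
      using hpos[of n] hpos[of "Suc n"] by simp
  qed
  then show ?thesis unfolding h_def .
qed

lemma ev_pos_lin:
  fixes a b :: real
  assumes "a > 0"
  shows "eventually (\<lambda>k. b + real k * a > 0) sequentially"
proof -
  have "\<forall>k\<ge>nat \<lceil>- b / a\<rceil> + 1. b + real k * a > 0"
  proof (intro allI impI)
    fix k assume "k \<ge> nat \<lceil>- b / a\<rceil> + 1"
    then have "real k > - b / a" by linarith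
    then have "real k * a > - b" using assms by (simp add: field_simps)
    then show "b + real k * a > 0" by simp
  qed
  then show ?thesis unfolding eventually_sequentially by blast
qed


theorem theorem5:
  fixes p q :: nat and \<alpha> A :: "nat \<Rightarrow> real" and \<beta> B :: "nat \<Rightarrow> real"
  assumes A_pos: "\<forall>i\<in>{1..p}. A i > 0"
    and B_pos: "\<forall>j\<in>{1..q}. B j > 0"
    and balance: "(\<Sum>k=1..q. \<beta> k) - (\<Sum>j=1..p. \<alpha> j) + (real p - real q) / 2 > 0"
    and sumeq: "(\<Sum>j=1..p. A j) = (\<Sum>k=1..q. B k)"
    and psi21: "\<forall>n::nat.
        (\<Prod>i=1..p. Gamma (\<alpha> i + real (n+2) * A i)) / (\<Prod>j=1..q. Gamma (\<beta> j + real (n+2) * B j))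
      < (\<Prod>i=1..p. Gamma (\<alpha> i + real (n+1) * A i)) / (\<Prod>j=1..q. Gamma (\<beta> j + real (n+1) * B j))"
    and psi_turan: "\<forall>n::nat.
        ((\<Prod>i=1..p. Gamma (\<alpha> i + real (n+1) * A i)) / (\<Prod>j=1..q. Gamma (\<beta> j + real (n+1) * B j)))\<^sup>2
      < ((\<Prod>i=1..p. Gamma (\<alpha> i + real n * A i)) / (\<Prod>j=1..q. Gamma (\<beta> j + real n * B j)))
        * ((\<Prod>i=1..p. Gamma (\<alpha> i + real (n+2) * A i)) / (\<Prod>j=1..q. Gamma (\<beta> j + real (n+2) * B j)))"
  defines "\<Xi> \<equiv> (\<lambda>z \<sigma>. fox_wright ((\<sigma>, 1) # map (\<lambda>i. (\<alpha> i, A i)) [1..<p+1])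
                                 (map (\<lambda>j. (\<beta> j, B j)) [1..<q+1]) z)"
  shows "(\<forall>z\<in>{0<..<1}. log_convex_on {0<..} (\<Xi> z))
    \<and> (\<forall>\<sigma>>0. \<forall>z\<in>{0<..<1}. \<Xi> z \<sigma> * \<Xi> z (\<sigma> + 2) - (\<Xi> z (\<sigma> + 1))\<^sup>2 \<ge> 0)"
proof -
  define \<psi> where "\<psi> k = (\<Prod>i=1..p. Gamma (\<alpha> i + real k * A i)) / (\<Prod>j=1..q. Gamma (\<beta> j + real k * B j))" for k :: nat
  have p21: "\<psi> (n+2) < \<psi> (n+1)" for n using psi21 unfolding \<psi>_def by blast
  have tur: "(\<psi> (n+1))\<^sup>2 < \<psi> n * \<psi> (n+2)" for n using psi_turan unfolding \<psi>_def by blast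
  have "eventually (\<lambda>k. (\<forall>i\<in>{1..p}. \<alpha> i + real k * A i > 0) \<and> (\<forall>j\<in>{1..q}. \<beta> j + real k * B j > 0)) sequentially"
    using A_pos B_pos by (intro eventually_conj eventually_ball_finite ballI ev_pos_lin) auto
  then obtain N where N: "\<And>k. k \<ge> N \<Longrightarrow> (\<forall>i\<in>{1..p}. \<alpha> i + real k * A i > 0) \<and> (\<forall>j\<in>{1..q}. \<beta> j + real k * B j > 0)"
    by (auto simp: eventually_sequentially)
  have evpos: "\<psi> k > 0" if "k \<ge> N" for k
    using N[OF that] unfolding \<psi>_def by (intro divide_pos_pos prod_pos) auto
  have psipos: "\<psi> n > 0" for n
  proof (rule ccontr)
    assume "\<not> \<psi> n > 0"
    have neg: "\<psi> (n + 2 * m) < 0" for m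
    proof (induction m)
      case 0
      have "\<psi> n * \<psi> (n+2) > 0" using tur[of n] by (smt (verit) zero_le_power2)
      then show ?case using \<open>\<not> \<psi> n > 0\<close> by (auto simp: zero_less_mult_iff)
    next
      case (Suc m)
      have "\<psi> (n + 2*m) * \<psi> (n + 2*m + 2) > 0" using tur[of "n + 2*m"] by (smt (verit) zero_le_power2)
      then show ?case using Suc by (auto simp: zero_less_mult_iff)
    qed
    show False using neg[of N] evpos[of "n + 2 * N"] by simp
  qed
  have dec: "\<psi> (Suc k) \<le> \<psi> 1" for k
  proof (induction k)
    case (Suc k)
    then show ?case using p21[of k] by simp
  qed simp
  define M where "M = max (\<psi> 0) (\<psi> 1)"
  have bound: "\<psi> k \<le> M" for k
    unfolding M_def using dec[of "k - 1"] by (cases k) auto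
  define c where "c z k = \<psi> k * z ^ k / fact k" for z :: real and k :: nat
  define S where "S z w = (\<Sum>k. c z k * Gamma (w + real k))" for z w :: real
  have XiS: "\<Xi> z w = S z w" for z w
    unfolding \<Xi>_def S_def fox_wright_def c_def \<psi>_def
    by (intro suminf_cong) (simp only: prod_list_pairs list.map prod_list.Cons, simp)
  have cpos: "c z k > 0" if "z > 0" for z k
    unfolding c_def using psipos[of k] that by simp
  have summ: "summable (\<lambda>k. c z k * Gamma (w + real k))" if z: "0 < z" "z < 1" and w: "w > 0" for z w
  proof (rule summable_comparison_test[OF _ summable_mult[OF gamma_summable[OF z w], of M]])
    show "\<exists>N. \<forall>n\<ge>N. norm (c z n * Gamma (w + real n)) \<le> M * (z ^ n * Gamma (w + real n) / fact n)"
    proof (intro exI allI impI)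
      fix n :: nat
      have g: "Gamma (w + real n) > 0" using w by simp
      have "c z n * Gamma (w + real n) = \<psi> n * (z ^ n * Gamma (w + real n) / fact n)"
        unfolding c_def by simp
      also have "\<dots> \<le> M * (z ^ n * Gamma (w + real n) / fact n)"
        using bound[of n] g z by (intro mult_right_mono) auto
      finally show "norm (c z n * Gamma (w + real n)) \<le> M * (z ^ n * Gamma (w + real n) / fact n)"
        using cpos[of z n] g z by simp
    qed
  qed
  have Spos: "S z w > 0" if "0 < z" "z < 1" "w > 0" for z w
    unfolding S_def using that cpos[of z]
    by (intro suminf_pos summ) auto
  have key: "S z ((1 - t) * x + t * y) \<le> S z x powr (1 - t) * S z y powr t"
    if z: "0 < z" "z < 1" and xy: "x > 0" "y > 0" and t: "0 < t" "t < 1" for z x y t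
  proof -
    have w: "(1 - t) * x + t * y > 0" using xy t by (smt (verit) mult_pos_pos)
    have m: "Gamma ((1 - t) * x + t * y + real k)
        \<le> Gamma (x + real k) powr (1 - t) * Gamma (y + real k) powr t" for k
    proof -
      have "(ln \<circ> Gamma) ((1 - t) *\<^sub>R (x + real k) + t *\<^sub>R (y + real k))
          \<le> (1 - t) * (ln \<circ> Gamma) (x + real k) + t * (ln \<circ> Gamma) (y + real k)"
        using xy t by (intro convex_onD[OF log_convex_Gamma_real]) auto
      moreover have "(1 - t) *\<^sub>R (x + real k) + t *\<^sub>R (y + real k) = (1 - t) * x + t * y + real k"
        by (simp add: algebra_simps)
      ultimately have "ln (Gamma ((1 - t) * x + t * y + real k))
          \<le> (1 - t) * ln (Gamma (x + real k)) + t * ln (Gamma (y + real k))" by simp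
      then have "exp (ln (Gamma ((1 - t) * x + t * y + real k)))
          \<le> exp ((1 - t) * ln (Gamma (x + real k)) + t * ln (Gamma (y + real k)))" by simp
      moreover have "Gamma (x + real k) > 0" "Gamma (y + real k) > 0" "Gamma ((1 - t) * x + t * y + real k) > 0"
        using w xy by auto
      ultimately show ?thesis by (simp add: powr_def exp_add mult.commute)
    qed
    have "summable (\<lambda>k. c z k * Gamma ((1 - t) * x + t * y + real k)) \<and>
      (\<Sum>k. c z k * Gamma ((1 - t) * x + t * y + real k))
        \<le> (\<Sum>k. c z k * Gamma (x + real k)) powr (1 - t) * (\<Sum>k. c z k * Gamma (y + real k)) powr t"
      using z xy t w
      by (intro holder_series cpos summ m less_imp_le[OF Gamma_real_pos]) auto
    then show ?thesis unfolding S_def by blast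
  qed
  have part1: "log_convex_on {0<..} (\<Xi> z)" if z: "z \<in> {0<..<1}" for z
    unfolding log_convex_on_def
  proof (intro conjI ballI)
    fix x :: real assume "x \<in> {0<..}"
    then show "\<Xi> z x > 0" using Spos z by (simp add: XiS)
  next
    show "convex_on {0<..} (\<lambda>x. ln (\<Xi> z x))"
    proof (rule convex_onI)
      fix t x y :: real
      assume t: "0 < t" "t < 1" and x: "x \<in> {0<..}" and y: "y \<in> {0<..}"
      have zz: "0 < z" "z < 1" using z by auto
      have px: "S z x > 0" and py: "S z y > 0" using Spos zz x y by auto
      have w: "(1 - t) * x + t * y > 0" using x y t by (smt (verit) mult_pos_pos greaterThan_iff)
      have "ln (S z ((1 - t) * x + t * y)) \<le> ln (S z x powr (1 - t) * S z y powr t)"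
        using key[OF zz _ _ t, of x y] x y Spos[OF zz w] by (intro ln_mono) auto
      also have "\<dots> = (1 - t) * ln (S z x) + t * ln (S z y)"
        using px py by (simp add: ln_mult ln_powr)
      finally show "ln (\<Xi> z ((1 - t) *\<^sub>R x + t *\<^sub>R y)) \<le> (1 - t) * ln (\<Xi> z x) + t * ln (\<Xi> z y)"
        by (simp add: XiS)
    qed (simp add: convex_real_interval)
  qed
  have part2: "\<Xi> z \<sigma> * \<Xi> z (\<sigma> + 2) - (\<Xi> z (\<sigma> + 1))\<^sup>2 \<ge> 0"
    if s: "\<sigma> > 0" and z: "z \<in> {0<..<1}" for \<sigma> z
  proof -
    have zz: "0 < z" "z < 1" using z by auto
    have k: "S z ((1 - 1/2) * \<sigma> + 1/2 * (\<sigma> + 2)) \<le> S z \<sigma> powr (1 - 1/2) * S z (\<sigma> + 2) powr (1/2)"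
      using key[OF zz, of \<sigma> "\<sigma> + 2" "1/2"] s by simp
    have e: "(1 - 1/2) * \<sigma> + 1/2 * (\<sigma> + 2) = \<sigma> + 1" by (simp add: field_simps)
    have p0: "S z \<sigma> > 0" "S z (\<sigma> + 2) > 0" "S z (\<sigma> + 1) > 0" using Spos[OF zz] s by auto
    have "S z (\<sigma> + 1) \<le> sqrt (S z \<sigma> * S z (\<sigma> + 2))"
      using k p0 unfolding e by (simp add: powr_half_sqrt real_sqrt_mult)
    then have "(S z (\<sigma> + 1))\<^sup>2 \<le> (sqrt (S z \<sigma> * S z (\<sigma> + 2)))\<^sup>2"
      using p0 by (intro power_mono) auto
    then show ?thesis using p0 by (simp add: XiS)
  qed
  show ?thesis using part1 part2 by blast
qed

end
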